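(* Let $\mathcal{L}_Q$ be a lattice liability network over a finite quiver $Q=(V,E,s,t)$, with payment lattices $L_v$, nominal liabilities $\ell_e$, pay-in aggregators $A_v$, distributors $D_v$ and pay-out aggregators $B_v$. Then the set of clearing sections of $\mathcal{L}_Q$ is nonempty and forms a complete lattice under the product order of $C^0=\prod_{v\in V}L_v$.
   Context: A quiver $Q=(V,E,s,t)$ consists of a vertex set $V$, an edge set $E$, and source and target maps $s,t:E\to V$ (multiple edges and self-loops are allowed); $t^{-1}(v)$ is the set of edges into $v$ and $s^{-1}(v)$ the set of edges out of $v$. A lattice liability network $\mathcal{L}_Q$ over a finite quiver $Q$ consists of: (1) for each $v\in V$ a complete lattice $L_v$ (the payment lattice), with top element $\top_v$; (2) for each $e\in E$ a nominal liability $\ell_e\in L_{s(e)}$; (3) for each $v$ a pay-in aggregator $A_v:\prod_{e\in t^{-1}(v)}L_{s(e)}\to L_v$, monotone in each coordinate; (4) for each $v$ a monotone distributor $D_v:L_v\to L_v^{s^{-1}(v)}$ and a monotone pay-out aggregator $B_v:L_v^{s^{-1}(v)}\to L_v$ with $B_v\circ D_v=\mathrm{id}_{L_v}$ and $[D_v(\top_v)]_e\le \ell_e$ for each $e\in s^{-1}(v)$. Let $C^0=\prod_{v\in V}L_v$ with the product order. For $\mathbf{x}=(x_v)\in C^0$ and $e\in E$, the edge payment is $p_e=[D_{s(e)}(x_{s(e)})]_e$. A clearing section is $\mathbf{x}\in C^0$ such that $x_v=A_v\big((p_e)_{e\in t^{-1}(v)}\big)$ for every $v\in V$. *)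

theory Defs
  imports "HOL-Algebra.Complete_Lattice" "HOL-Library.FuncSet"
begin

text \<open>
  Payment lattices: one HOL-Algebra complete lattice L v per vertex, all with
  elements in a common ambient type 'l (every family of complete lattices can be
  so represented, e.g. via a disjoint union).
\<close>

definition in_edges :: "'e set \<Rightarrow> ('e \<Rightarrow> 'v) \<Rightarrow> 'v \<Rightarrow> 'e set" where
  "in_edges E t v = {e \<in> E. t e = v}"

definition out_edges :: "'e set \<Rightarrow> ('e \<Rightarrow> 'v) \<Rightarrow> 'v \<Rightarrow> 'e set" where
  "out_edges E s v = {e \<in> E. s e = v}"

definition lattice_liability_network ::
  "'v set \<Rightarrow> 'e set \<Rightarrow> ('e \<Rightarrow> 'v) \<Rightarrow> ('e \<Rightarrow> 'v) \<Rightarrow>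
   ('v \<Rightarrow> ('l, 'm) gorder_scheme) \<Rightarrow> ('e \<Rightarrow> 'l) \<Rightarrow>
   ('v \<Rightarrow> ('e \<Rightarrow> 'l) \<Rightarrow> 'l) \<Rightarrow> ('v \<Rightarrow> 'l \<Rightarrow> ('e \<Rightarrow> 'l)) \<Rightarrow>
   ('v \<Rightarrow> ('e \<Rightarrow> 'l) \<Rightarrow> 'l) \<Rightarrow> bool" where
  "lattice_liability_network V E s t L ell A D B \<longleftrightarrow>
     \<comment> \<open>finite quiver\<close>
     finite V \<and> finite E \<and> (\<forall>e\<in>E. s e \<in> V \<and> t e \<in> V) \<and>
     \<comment> \<open>(1) payment lattices\<close>
     (\<forall>v\<in>V. complete_lattice (L v)) \<and>
     \<comment> \<open>(2) nominal liabilities\<close>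
     (\<forall>e\<in>E. ell e \<in> carrier (L (s e))) \<and>
     \<comment> \<open>(3) pay-in aggregators, monotone in each coordinate\<close>
     (\<forall>v\<in>V.
        (\<forall>p \<in> (\<Pi>\<^sub>E e\<in>in_edges E t v. carrier (L (s e))). A v p \<in> carrier (L v)) \<and>
        (\<forall>p \<in> (\<Pi>\<^sub>E e\<in>in_edges E t v. carrier (L (s e))). \<forall>e\<in>in_edges E t v.
           \<forall>y\<in>carrier (L (s e)). p e \<sqsubseteq>\<^bsub>L (s e)\<^esub> y \<longrightarrow>
             A v p \<sqsubseteq>\<^bsub>L v\<^esub> A v (p(e := y)))) \<and>
     \<comment> \<open>(4) distributors and pay-out aggregators\<close>
     (\<forall>v\<in>V.
        (\<forall>x\<in>carrier (L v). D v x \<in> (\<Pi>\<^sub>E e\<in>out_edges E s v. carrier (L v))) \<and>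
        (\<forall>x\<in>carrier (L v). \<forall>y\<in>carrier (L v). x \<sqsubseteq>\<^bsub>L v\<^esub> y \<longrightarrow>
           (\<forall>e\<in>out_edges E s v. D v x e \<sqsubseteq>\<^bsub>L v\<^esub> D v y e)) \<and>
        (\<forall>q \<in> (\<Pi>\<^sub>E e\<in>out_edges E s v. carrier (L v)). B v q \<in> carrier (L v)) \<and>
        (\<forall>q \<in> (\<Pi>\<^sub>E e\<in>out_edges E s v. carrier (L v)).
           \<forall>r \<in> (\<Pi>\<^sub>E e\<in>out_edges E s v. carrier (L v)).
           (\<forall>e\<in>out_edges E s v. q e \<sqsubseteq>\<^bsub>L v\<^esub> r e) \<longrightarrow> B v q \<sqsubseteq>\<^bsub>L v\<^esub> B v r) \<and>
        (\<forall>x\<in>carrier (L v). B v (D v x) = x) \<and>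
        (\<forall>e\<in>out_edges E s v. D v (\<top>\<^bsub>L v\<^esub>) e \<sqsubseteq>\<^bsub>L v\<^esub> ell e))"

definition cochains0 :: "'v set \<Rightarrow> ('v \<Rightarrow> ('l, 'm) gorder_scheme) \<Rightarrow> ('v \<Rightarrow> 'l) set" where
  "cochains0 V L = (\<Pi>\<^sub>E v\<in>V. carrier (L v))"

definition edge_payment :: "('e \<Rightarrow> 'v) \<Rightarrow> ('v \<Rightarrow> 'l \<Rightarrow> ('e \<Rightarrow> 'l)) \<Rightarrow> ('v \<Rightarrow> 'l) \<Rightarrow> 'e \<Rightarrow> 'l" where
  "edge_payment s D x e = D (s e) (x (s e)) e"

definition clearing_sections ::
  "'v set \<Rightarrow> 'e set \<Rightarrow> ('e \<Rightarrow> 'v) \<Rightarrow> ('e \<Rightarrow> 'v) \<Rightarrow>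
   ('v \<Rightarrow> ('l, 'm) gorder_scheme) \<Rightarrow>
   ('v \<Rightarrow> ('e \<Rightarrow> 'l) \<Rightarrow> 'l) \<Rightarrow> ('v \<Rightarrow> 'l \<Rightarrow> ('e \<Rightarrow> 'l)) \<Rightarrow> ('v \<Rightarrow> 'l) set" where
  "clearing_sections V E s t L A D =
     {x \<in> cochains0 V L. \<forall>v\<in>V.
        x v = A v (\<lambda>e\<in>in_edges E t v. edge_payment s D x e)}"

definition product_order_on ::
  "'v set \<Rightarrow> ('v \<Rightarrow> ('l, 'm) gorder_scheme) \<Rightarrow> ('v \<Rightarrow> 'l) set \<Rightarrow> ('v \<Rightarrow> 'l) gorder" where
  "product_order_on V L S =
     \<lparr> carrier = S, eq = (=), le = (\<lambda>x y. \<forall>v\<in>V. x v \<sqsubseteq>\<^bsub>L v\<^esub> y v) \<rparr>"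

end

theory Submission
  imports Defs
begin

lemma mono_coordwise:
  fixes f :: "('e \<Rightarrow> 'l) \<Rightarrow> 'l" and M :: "('l,'m) gorder_scheme"
  assumes fin: "finite I" and wpo: "weak_partial_order M"
    and cl: "\<forall>p\<in>(\<Pi>\<^sub>E e\<in>I. C e). f p \<in> carrier M"
    and mon: "\<forall>p\<in>(\<Pi>\<^sub>E e\<in>I. C e). \<forall>e\<in>I. \<forall>y\<in>C e. R e (p e) y \<longrightarrow> f p \<sqsubseteq>\<^bsub>M\<^esub> f (p(e := y))"
    and p: "p \<in> (\<Pi>\<^sub>E e\<in>I. C e)" and q: "q \<in> (\<Pi>\<^sub>E e\<in>I. C e)"
    and pq: "\<forall>e\<in>I. R e (p e) (q e)"
  shows "f p \<sqsubseteq>\<^bsub>M\<^esub> f q"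
proof -
  interpret M: weak_partial_order M by (rule wpo)
  define r where "r K = (\<lambda>e\<in>I. if e \<in> K then q e else p e)" for K
  have rP: "r K \<in> (\<Pi>\<^sub>E e\<in>I. C e)" for K using p q unfolding r_def by auto
  have "K \<subseteq> I \<Longrightarrow> f p \<sqsubseteq>\<^bsub>M\<^esub> f (r K)" if "finite K" for K
    using that
  proof (induction K rule: finite_induct)
    case empty
    have "r {} = p" using p unfolding r_def by (auto simp: PiE_def extensional_def)
    then show ?case using cl p by auto
  next
    case (insert k K)
    have kI: "k \<in> I" using insert by auto
    have eq: "r (insert k K) = (r K)(k := q k)"
      unfolding r_def using kI by (auto simp: fun_eq_iff)
    have "R k (r K k) (q k)" using pq kI insert(2) unfolding r_def by auto
    moreover have "q k \<in> C k" using q kI by auto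
    ultimately have "f (r K) \<sqsubseteq>\<^bsub>M\<^esub> f (r (insert k K))"
      using mon rP kI eq by metis
    moreover have "f p \<sqsubseteq>\<^bsub>M\<^esub> f (r K)" using insert by auto
    ultimately show ?case using M.le_trans cl rP p by metis
  qed
  moreover have "r I = q" using q unfolding r_def by (auto simp: PiE_def extensional_def)
  ultimately show ?thesis using fin by auto
qed

lemma cl_wcl: "complete_lattice L \<Longrightarrow> weak_complete_lattice L"
  by (simp add: complete_lattice.axioms(1) partial_order.axioms(1) weak_complete_lattice_def
      weak_complete_lattice_axioms_def complete_lattice.sup_exists complete_lattice.inf_exists)

lemma cl_wpo: "complete_lattice L \<Longrightarrow> weak_partial_order L"
  by (simp add: complete_lattice.axioms(1) partial_order.axioms(1))

lemma product_complete:
  assumes "\<forall>v\<in>V. complete_lattice (L v)"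
  shows "complete_lattice (product_order_on V L (cochains0 V L))"
    (is "complete_lattice ?P")
proof -
  have CL: "complete_lattice (L v)" if "v \<in> V" for v using assms that by auto
  have po: "partial_order ?P"
  proof
    show "x .=\<^bsub>?P\<^esub> x" for x by (simp add: product_order_on_def)
    show "x .=\<^bsub>?P\<^esub> y \<Longrightarrow> y .=\<^bsub>?P\<^esub> x" for x y by (simp add: product_order_on_def)
    show "x .=\<^bsub>?P\<^esub> y \<Longrightarrow> y .=\<^bsub>?P\<^esub> z \<Longrightarrow> x .=\<^bsub>?P\<^esub> z" for x y z by (simp add: product_order_on_def)
    have mem: "x v \<in> carrier (L v)" if "x \<in> carrier ?P" "v \<in> V" for x v
    proof -
      have "x \<in> (\<Pi>\<^sub>E v\<in>V. carrier (L v))" using that(1) by (simp add: product_order_on_def cochains0_def)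
      then show ?thesis using that(2) by (rule PiE_mem)
    qed
    have ext: "x \<in> extensional V" if "x \<in> carrier ?P" for x
      using that by (simp add: product_order_on_def cochains0_def PiE_def)
    show "x \<in> carrier ?P \<Longrightarrow> x \<sqsubseteq>\<^bsub>?P\<^esub> x" for x
    proof -
      assume x: "x \<in> carrier ?P"
      have "\<forall>v\<in>V. x v \<sqsubseteq>\<^bsub>L v\<^esub> x v"
      proof
        fix v assume v: "v \<in> V"
        show "x v \<sqsubseteq>\<^bsub>L v\<^esub> x v" by (rule weak_partial_order.le_refl[OF cl_wpo[OF CL[OF v]] mem[OF x v]])
      qed
      then show ?thesis by (simp add: product_order_on_def)
    qed
    show "x \<sqsubseteq>\<^bsub>?P\<^esub> y \<Longrightarrow> y \<sqsubseteq>\<^bsub>?P\<^esub> x \<Longrightarrow> x \<in> carrier ?P \<Longrightarrow> y \<in> carrier ?P \<Longrightarrow> x .=\<^bsub>?P\<^esub> y" for x y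
    proof -
      assume a: "x \<sqsubseteq>\<^bsub>?P\<^esub> y" "y \<sqsubseteq>\<^bsub>?P\<^esub> x" and x: "x \<in> carrier ?P" and y: "y \<in> carrier ?P"
      have "x v = y v" if v: "v \<in> V" for v
      proof -
        have "x v \<sqsubseteq>\<^bsub>L v\<^esub> y v" "y v \<sqsubseteq>\<^bsub>L v\<^esub> x v" using a v by (simp_all add: product_order_on_def)
        then show ?thesis
          using partial_order.le_antisym[OF complete_lattice.axioms(1)[OF CL[OF v]] _ _ mem[OF x v] mem[OF y v]] by blast
      qed
      then have "x = y" using extensionalityI[OF ext[OF x] ext[OF y]] by blast
      then show ?thesis by (simp add: product_order_on_def)
    qed
    show "x \<sqsubseteq>\<^bsub>?P\<^esub> y \<Longrightarrow> y \<sqsubseteq>\<^bsub>?P\<^esub> z \<Longrightarrow> x \<in> carrier ?P \<Longrightarrow> y \<in> carrier ?P \<Longrightarrow> z \<in> carrier ?P \<Longrightarrow> x \<sqsubseteq>\<^bsub>?P\<^esub> z" for x y z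
    proof -
      assume a: "x \<sqsubseteq>\<^bsub>?P\<^esub> y" "y \<sqsubseteq>\<^bsub>?P\<^esub> z" and x: "x \<in> carrier ?P" and y: "y \<in> carrier ?P" and z: "z \<in> carrier ?P"
      have "\<forall>v\<in>V. x v \<sqsubseteq>\<^bsub>L v\<^esub> z v"
      proof
        fix v assume v: "v \<in> V"
        have "x v \<sqsubseteq>\<^bsub>L v\<^esub> y v" "y v \<sqsubseteq>\<^bsub>L v\<^esub> z v" using a v by (simp_all add: product_order_on_def)
        then show "x v \<sqsubseteq>\<^bsub>L v\<^esub> z v"
          using weak_partial_order.le_trans[OF cl_wpo[OF CL[OF v]] _ _ mem[OF x v] mem[OF y v] mem[OF z v]] by blast
      qed
      then show ?thesis by (simp add: product_order_on_def)
    qed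
    show "x .=\<^bsub>?P\<^esub> y \<Longrightarrow> z .=\<^bsub>?P\<^esub> w \<Longrightarrow> x \<in> carrier ?P \<Longrightarrow> y \<in> carrier ?P \<Longrightarrow> z \<in> carrier ?P \<Longrightarrow> w \<in> carrier ?P \<Longrightarrow> (x \<sqsubseteq>\<^bsub>?P\<^esub> z) = (y \<sqsubseteq>\<^bsub>?P\<^esub> w)" for x y z w
      by (simp add: product_order_on_def)
    show "(.=\<^bsub>?P\<^esub>) = (=)" by (simp add: product_order_on_def)
  qed
  show ?thesis
  proof (rule partial_order.complete_latticeI[OF po])
    fix X assume X: "X \<subseteq> carrier ?P"
    define s where "s = (\<lambda>v\<in>V. \<Squnion>\<^bsub>L v\<^esub> ((\<lambda>x. x v) ` X))"
    have sub: "(\<lambda>x. x v) ` X \<subseteq> carrier (L v)" if "v \<in> V" for v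
      using X that by (auto simp: product_order_on_def cochains0_def)
    have sv: "s v = \<Squnion>\<^bsub>L v\<^esub> ((\<lambda>x. x v) ` X)" if "v \<in> V" for v
      using that by (simp add: s_def)
    have sc: "s \<in> cochains0 V L"
    proof -
      have "\<Squnion>\<^bsub>L v\<^esub> ((\<lambda>x. x v) ` X) \<in> carrier (L v)" if "v \<in> V" for v
        using weak_complete_lattice.sup_closed[OF cl_wcl[OF CL[OF that]] sub[OF that]] .
      then show ?thesis unfolding s_def cochains0_def by (simp add: restrict_PiE_iff)
    qed
    have up: "\<forall>v\<in>V. x v \<sqsubseteq>\<^bsub>L v\<^esub> s v" if "x \<in> X" for x
    proof
      fix v assume v: "v \<in> V"
      have "x v \<in> (\<lambda>x. x v) ` X" using that by (rule imageI)
      from weak_complete_lattice.sup_upper[OF cl_wcl[OF CL[OF v]] sub[OF v] this]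
      show "x v \<sqsubseteq>\<^bsub>L v\<^esub> s v" unfolding sv[OF v] .
    qed
    have lst: "\<forall>v\<in>V. s v \<sqsubseteq>\<^bsub>L v\<^esub> u v"
      if uc: "u \<in> cochains0 V L" and uu: "\<forall>x\<in>X. \<forall>v\<in>V. x v \<sqsubseteq>\<^bsub>L v\<^esub> u v" for u
    proof
      fix v assume v: "v \<in> V"
      have uv: "u v \<in> carrier (L v)" using uc v unfolding cochains0_def by (rule PiE_mem)
      have "\<And>y. y \<in> (\<lambda>x. x v) ` X \<Longrightarrow> y \<sqsubseteq>\<^bsub>L v\<^esub> u v"
        using uu v by blast
      from weak_complete_lattice.sup_least[OF cl_wcl[OF CL[OF v]] sub[OF v] uv this]
      show "s v \<sqsubseteq>\<^bsub>L v\<^esub> u v" unfolding sv[OF v] .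
    qed
    have "least ?P s (Upper ?P X)"
    proof -
      have a: "s \<in> Upper ?P X" unfolding Upper_def using sc up by (simp add: product_order_on_def)
      have b: "s \<sqsubseteq>\<^bsub>?P\<^esub> u" if u: "u \<in> Upper ?P X" for u
      proof -
        have uc: "u \<in> cochains0 V L" using u unfolding Upper_def by (simp add: product_order_on_def)
        have Xc: "X \<subseteq> cochains0 V L" using X by (simp add: product_order_on_def)
        have uu: "\<forall>x\<in>X. \<forall>v\<in>V. x v \<sqsubseteq>\<^bsub>L v\<^esub> u v"
        proof
          fix x assume x: "x \<in> X"
          then have "x \<in> cochains0 V L" using Xc by blast
          then show "\<forall>v\<in>V. x v \<sqsubseteq>\<^bsub>L v\<^esub> u v" using u x unfolding Upper_def by (simp add: product_order_on_def)
        qed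
        show ?thesis using lst[OF uc uu] by (simp add: product_order_on_def)
      qed
      show ?thesis unfolding least_def using a b by blast
    qed
    then show "\<exists>s. least ?P s (Upper ?P X)" by blast
  next
    fix X assume X: "X \<subseteq> carrier ?P"
    define s where "s = (\<lambda>v\<in>V. \<Sqinter>\<^bsub>L v\<^esub> ((\<lambda>x. x v) ` X))"
    have sub: "(\<lambda>x. x v) ` X \<subseteq> carrier (L v)" if "v \<in> V" for v
      using X that by (auto simp: product_order_on_def cochains0_def)
    have sv: "s v = \<Sqinter>\<^bsub>L v\<^esub> ((\<lambda>x. x v) ` X)" if "v \<in> V" for v
      using that by (simp add: s_def)
    have sc: "s \<in> cochains0 V L"
    proof -
      have "\<Sqinter>\<^bsub>L v\<^esub> ((\<lambda>x. x v) ` X) \<in> carrier (L v)" if "v \<in> V" for v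
        using weak_complete_lattice.inf_closed[OF cl_wcl[OF CL[OF that]] sub[OF that]] .
      then show ?thesis unfolding s_def cochains0_def by (simp add: restrict_PiE_iff)
    qed
    have up: "\<forall>v\<in>V. s v \<sqsubseteq>\<^bsub>L v\<^esub> x v" if "x \<in> X" for x
    proof
      fix v assume v: "v \<in> V"
      have "x v \<in> (\<lambda>x. x v) ` X" using that by (rule imageI)
      from weak_complete_lattice.inf_lower[OF cl_wcl[OF CL[OF v]] sub[OF v] this]
      show "s v \<sqsubseteq>\<^bsub>L v\<^esub> x v" unfolding sv[OF v] .
    qed
    have lst: "\<forall>v\<in>V. u v \<sqsubseteq>\<^bsub>L v\<^esub> s v"
      if uc: "u \<in> cochains0 V L" and uu: "\<forall>x\<in>X. \<forall>v\<in>V. u v \<sqsubseteq>\<^bsub>L v\<^esub> x v" for u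
    proof
      fix v assume v: "v \<in> V"
      have uv: "u v \<in> carrier (L v)" using uc v unfolding cochains0_def by (rule PiE_mem)
      have "\<And>y. y \<in> (\<lambda>x. x v) ` X \<Longrightarrow> u v \<sqsubseteq>\<^bsub>L v\<^esub> y"
        using uu v by blast
      from weak_complete_lattice.inf_greatest[OF cl_wcl[OF CL[OF v]] sub[OF v] uv this]
      show "u v \<sqsubseteq>\<^bsub>L v\<^esub> s v" unfolding sv[OF v] .
    qed
    have "greatest ?P s (Lower ?P X)"
    proof -
      have a: "s \<in> Lower ?P X" unfolding Lower_def using sc up by (simp add: product_order_on_def)
      have b: "u \<sqsubseteq>\<^bsub>?P\<^esub> s" if u: "u \<in> Lower ?P X" for u
      proof -
        have uc: "u \<in> cochains0 V L" using u unfolding Lower_def by (simp add: product_order_on_def)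
        have Xc: "X \<subseteq> cochains0 V L" using X by (simp add: product_order_on_def)
        have uu: "\<forall>x\<in>X. \<forall>v\<in>V. u v \<sqsubseteq>\<^bsub>L v\<^esub> x v"
        proof
          fix x assume x: "x \<in> X"
          then have "x \<in> cochains0 V L" using Xc by blast
          then show "\<forall>v\<in>V. u v \<sqsubseteq>\<^bsub>L v\<^esub> x v" using u x unfolding Lower_def by (simp add: product_order_on_def)
        qed
        show ?thesis using lst[OF uc uu] by (simp add: product_order_on_def)
      qed
      show ?thesis unfolding greatest_def using a b by blast
    qed
    then show "\<exists>s. greatest ?P s (Lower ?P X)" by blast
  qed
qed

lemma wcl_cl:
  assumes "weak_complete_lattice X" "(.=\<^bsub>X\<^esub>) = (=)"
  shows "complete_lattice X"
proof -
  interpret weak_complete_lattice X by fact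
  show ?thesis
    by unfold_locales (auto intro: sup_exists inf_exists simp: assms(2))
qed

theorem theorem1:
  fixes V :: "'v set" and E :: "'e set" and s t :: "'e \<Rightarrow> 'v"
    and L :: "'v \<Rightarrow> ('l, 'm) gorder_scheme" and ell :: "'e \<Rightarrow> 'l"
    and A :: "'v \<Rightarrow> ('e \<Rightarrow> 'l) \<Rightarrow> 'l" and D :: "'v \<Rightarrow> 'l \<Rightarrow> ('e \<Rightarrow> 'l)"
    and B :: "'v \<Rightarrow> ('e \<Rightarrow> 'l) \<Rightarrow> 'l"
  assumes "lattice_liability_network V E s t L ell A D B"
  shows "clearing_sections V E s t L A D \<noteq> {} \<and>
         complete_lattice (product_order_on V L (clearing_sections V E s t L A D))"
proof -
  note N = assms[unfolded lattice_liability_network_def]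
  have finE: "finite E" using N[THEN conjunct2, THEN conjunct1] .
  have stV0: "\<forall>e\<in>E. s e \<in> V \<and> t e \<in> V" using N[THEN conjunct2, THEN conjunct2, THEN conjunct1] .
  have stV: "\<And>e. e \<in> E \<Longrightarrow> s e \<in> V \<and> t e \<in> V" using stV0 by (rule bspec)
  have CL: "\<forall>v\<in>V. complete_lattice (L v)" using N[THEN conjunct2, THEN conjunct2, THEN conjunct2, THEN conjunct1] .
  have AA: "\<forall>v\<in>V.
        (\<forall>p \<in> (\<Pi>\<^sub>E e\<in>in_edges E t v. carrier (L (s e))). A v p \<in> carrier (L v)) \<and>
        (\<forall>p \<in> (\<Pi>\<^sub>E e\<in>in_edges E t v. carrier (L (s e))). \<forall>e\<in>in_edges E t v.
           \<forall>y\<in>carrier (L (s e)). p e \<sqsubseteq>\<^bsub>L (s e)\<^esub> y \<longrightarrow>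
             A v p \<sqsubseteq>\<^bsub>L v\<^esub> A v (p(e := y)))"
    using N[THEN conjunct2, THEN conjunct2, THEN conjunct2, THEN conjunct2, THEN conjunct2, THEN conjunct1] .
  have DD: "\<forall>v\<in>V.
        (\<forall>x\<in>carrier (L v). D v x \<in> (\<Pi>\<^sub>E e\<in>out_edges E s v. carrier (L v))) \<and>
        (\<forall>x\<in>carrier (L v). \<forall>y\<in>carrier (L v). x \<sqsubseteq>\<^bsub>L v\<^esub> y \<longrightarrow>
           (\<forall>e\<in>out_edges E s v. D v x e \<sqsubseteq>\<^bsub>L v\<^esub> D v y e)) \<and> True"
    using N[THEN conjunct2, THEN conjunct2, THEN conjunct2, THEN conjunct2, THEN conjunct2, THEN conjunct2] by simp
  have Acl: "\<And>v p. v \<in> V \<Longrightarrow> p \<in> (\<Pi>\<^sub>E e\<in>in_edges E t v. carrier (L (s e))) \<Longrightarrow> A v p \<in> carrier (L v)"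
    using AA by simp
  have Amon: "\<And>v. v \<in> V \<Longrightarrow> \<forall>p \<in> (\<Pi>\<^sub>E e\<in>in_edges E t v. carrier (L (s e))). \<forall>e\<in>in_edges E t v.
           \<forall>y\<in>carrier (L (s e)). p e \<sqsubseteq>\<^bsub>L (s e)\<^esub> y \<longrightarrow>
             A v p \<sqsubseteq>\<^bsub>L v\<^esub> A v (p(e := y))"
    using AA by simp
  have Dcl: "\<And>v x. v \<in> V \<Longrightarrow> x \<in> carrier (L v) \<Longrightarrow> D v x \<in> (\<Pi>\<^sub>E e\<in>out_edges E s v. carrier (L v))"
    using DD by simp
  have Dmon: "\<And>v x y e. v \<in> V \<Longrightarrow> x \<in> carrier (L v) \<Longrightarrow> y \<in> carrier (L v) \<Longrightarrow> x \<sqsubseteq>\<^bsub>L v\<^esub> y \<Longrightarrow>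
           e \<in> out_edges E s v \<Longrightarrow> D v x e \<sqsubseteq>\<^bsub>L v\<^esub> D v y e"
    using DD by simp
  define P where "P = product_order_on V L (cochains0 V L)"
  have PCL: "complete_lattice P" unfolding P_def by (rule product_complete[OF CL])
  define F where "F x = (\<lambda>v\<in>V. A v (\<lambda>e\<in>in_edges E t v. edge_payment s D x e))" for x
  have pay: "(\<lambda>e\<in>in_edges E t v. edge_payment s D x e) \<in> (\<Pi>\<^sub>E e\<in>in_edges E t v. carrier (L (s e)))"
    if x: "x \<in> cochains0 V L" and v: "v \<in> V" for x v
  proof (unfold restrict_PiE_iff, intro ballI)
    fix e assume e: "e \<in> in_edges E t v"
    then have eE: "e \<in> E" by (simp add: in_edges_def)
    then have sV: "s e \<in> V" using stV by blast
    have xs: "x (s e) \<in> carrier (L (s e))" using x sV unfolding cochains0_def by (rule PiE_mem)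
    have eo: "e \<in> out_edges E s (s e)" using eE by (simp add: out_edges_def)
    show "edge_payment s D x e \<in> carrier (L (s e))"
      unfolding edge_payment_def using Dcl[OF sV xs] eo by (rule PiE_mem)
  qed
  have Fc: "F \<in> carrier P \<rightarrow> carrier P"
  proof
    fix x assume "x \<in> carrier P"
    then have x: "x \<in> cochains0 V L" by (simp add: P_def product_order_on_def)
    have "F x \<in> cochains0 V L"
      unfolding F_def cochains0_def unfolding restrict_PiE_iff using Acl pay[OF x] by blast
    then show "F x \<in> carrier P" by (simp add: P_def product_order_on_def)
  qed
  have iso: "isotone P P F"
    unfolding isotone_def
  proof (intro conjI ballI impI)
    show "weak_partial_order P" using PCL by (rule cl_wpo)
    then show "weak_partial_order P" .
    fix x y assume xP: "x \<in> carrier P" and yP: "y \<in> carrier P" and xy: "x \<sqsubseteq>\<^bsub>P\<^esub> y"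
    have x: "x \<in> cochains0 V L" and y: "y \<in> cochains0 V L" and xyv: "\<forall>v\<in>V. x v \<sqsubseteq>\<^bsub>L v\<^esub> y v"
      using xP yP xy by (simp_all add: P_def product_order_on_def)
    have "A v (\<lambda>e\<in>in_edges E t v. edge_payment s D x e) \<sqsubseteq>\<^bsub>L v\<^esub> A v (\<lambda>e\<in>in_edges E t v. edge_payment s D y e)"
      if v: "v \<in> V" for v
    proof -
      have f1: "finite (in_edges E t v)" using finE by (simp add: in_edges_def)
      have f2: "weak_partial_order (L v)" using CL v by (simp add: cl_wpo)
      have f3: "\<forall>p\<in>(\<Pi>\<^sub>E e\<in>in_edges E t v. carrier (L (s e))). A v p \<in> carrier (L v)" using Acl v by blast
      have f4: "\<forall>p\<in>(\<Pi>\<^sub>E e\<in>in_edges E t v. carrier (L (s e))). \<forall>e\<in>in_edges E t v. \<forall>ya\<in>carrier (L (s e)).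
          p e \<sqsubseteq>\<^bsub>L (s e)\<^esub> ya \<longrightarrow> A v p \<sqsubseteq>\<^bsub>L v\<^esub> A v (p(e := ya))" using Amon[OF v] .
      have f5: "(\<lambda>e\<in>in_edges E t v. edge_payment s D x e) \<in> (\<Pi>\<^sub>E e\<in>in_edges E t v. carrier (L (s e)))"
        using x v by (rule pay)
      have f6: "(\<lambda>e\<in>in_edges E t v. edge_payment s D y e) \<in> (\<Pi>\<^sub>E e\<in>in_edges E t v. carrier (L (s e)))"
        using y v by (rule pay)
      have f7: "\<forall>e\<in>in_edges E t v. (\<lambda>e\<in>in_edges E t v. edge_payment s D x e) e \<sqsubseteq>\<^bsub>L (s e)\<^esub> (\<lambda>e\<in>in_edges E t v. edge_payment s D y e) e"
      proof
        fix e assume e: "e \<in> in_edges E t v"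
        then have eE: "e \<in> E" by (simp add: in_edges_def)
        then have sV: "s e \<in> V" using stV by blast
        have xs: "x (s e) \<in> carrier (L (s e))" using x sV unfolding cochains0_def by (rule PiE_mem)
        have ys: "y (s e) \<in> carrier (L (s e))" using y sV unfolding cochains0_def by (rule PiE_mem)
        have eo: "e \<in> out_edges E s (s e)" using eE by (simp add: out_edges_def)
        have "D (s e) (x (s e)) e \<sqsubseteq>\<^bsub>L (s e)\<^esub> D (s e) (y (s e)) e"
          using Dmon[OF sV xs ys _ eo] xyv sV by blast
        then show "(\<lambda>e\<in>in_edges E t v. edge_payment s D x e) e \<sqsubseteq>\<^bsub>L (s e)\<^esub> (\<lambda>e\<in>in_edges E t v. edge_payment s D y e) e"
          using e by (simp add: edge_payment_def)
      qed
      show ?thesis by (rule mono_coordwise[where C = "\<lambda>e. carrier (L (s e))" and R = "\<lambda>e. le (L (s e))", OF f1 f2 f3 f4 f5 f6 f7])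
    qed
    then show "F x \<sqsubseteq>\<^bsub>P\<^esub> F y" by (simp add: P_def product_order_on_def F_def)
  qed
  have KT: "weak_complete_lattice (fpl P F)"
    by (rule Knaster_Tarski[OF cl_wcl[OF PCL] Fc iso])
  have fps_eq: "fps P F = clearing_sections V E s t L A D"
  proof (rule Set.set_eqI)
    fix x
    show "x \<in> fps P F \<longleftrightarrow> x \<in> clearing_sections V E s t L A D"
    proof (cases "x \<in> cochains0 V L")
      case True
      have Fx: "F x \<in> cochains0 V L" using Fc True by (auto simp: P_def product_order_on_def)
      have "F x = x \<longleftrightarrow> (\<forall>v\<in>V. x v = F x v)"
      proof
        assume "\<forall>v\<in>V. x v = F x v"
        then show "F x = x" using Fx True unfolding cochains0_def
          by (metis PiE_ext)
      qed simp
      then show ?thesis using True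
        by (simp add: fps_def P_def product_order_on_def clearing_sections_def F_def)
    next
      case False
      then show ?thesis by (simp add: fps_def P_def product_order_on_def clearing_sections_def)
    qed
  qed
  have eqP: "product_order_on V L (clearing_sections V E s t L A D) = P\<lparr>carrier := fps P F\<rparr>"
    unfolding fps_eq by (simp add: P_def product_order_on_def)
  have CLR: "complete_lattice (product_order_on V L (clearing_sections V E s t L A D))"
    unfolding eqP by (rule wcl_cl[OF KT]) (simp add: P_def product_order_on_def)
  have "\<Squnion>\<^bsub>fpl P F\<^esub> {} \<in> carrier (fpl P F)"
    by (rule weak_complete_lattice.sup_closed[OF KT]) simp
  then have "clearing_sections V E s t L A D \<noteq> {}" using fps_eq by auto
  with CLR show ?thesis by blast
qed

end
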